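(* For $A=\mathbb Z\times\mathbb Z_2$ the Tamanoi type equation fails. Concretely, $\zeta^{(A)}_{({\rm pt},\{e\})}(t)=1+t+2t^2+O(t^3)$, $\zeta^{(A)}_{({\rm pt},\mathbb Z_2)}(t)=1+2t+4t^2+O(t^3)$ and $\chi^{(A)}({\rm pt},\mathbb Z_2)=2$, so that $\zeta^{(A)}_{({\rm pt},\mathbb Z_2)}(t)\neq\left(\zeta^{(A)}_{({\rm pt},\{e\})}(t)\right)^{\chi^{(A)}({\rm pt},\mathbb Z_2)}$.
   Context: For a finitely generated group $A$ and finite group $G$ acting on the one-point space ${\rm pt}$, $\chi^{(A)}({\rm pt},G)=|{\rm Hom}(A,G)|/|G|$. $G_n=G\wr S_n=G^n\rtimes S_n$ is the wreath product (multiplication $((g_i),s)((g'_i),s')=((g_ig'_{s^{-1}(i)}),ss')$), and $\zeta^{(A)}_{({\rm pt},G)}(t)=1+\sum_{n\ge1}\chi^{(A)}({\rm pt},G_n)t^n$. For a finitely generated $A$, the Tamanoi type equation is said to hold if there is a power series $Z_A(t)\in1+t\mathbb Q[[t]]$ such that for every finite group $G$ and every $G$-invariant union $X$ of cells of a finite $G$-CW-complex, $1+\sum_{n\ge1}\chi^{(A)}(X^n,G_n)t^n=Z_A(t)^{\chi^{(A)}(X,G)}$, where $\chi^{(A)}(X,G)=\frac1{|G|}\sum_{\varphi\in{\rm Hom}(A,G)}\chi(X^{\varphi(A)})$ with $\chi$ the Euler characteristic with compact support, $G_n$ acting on $X^n$ by $((g_i),s)(x_i)=(g_ix_{s^{-1}(i)})$,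 and $f^c=\exp(c\log f)$; necessarily $Z_A=\zeta^{(A)}_{({\rm pt},\{e\})}$. *)

theory Defs
  imports "HOL-Algebra.Group" "HOL-Library.FuncSet" "HOL-Combinatorics.Permutations"
          "HOL-Computational_Algebra.Formal_Power_Series"
begin

definition ZxZ2 :: "(int \<times> bool) monoid" where
  "ZxZ2 = \<lparr>carrier = UNIV, monoid.mult = (\<lambda>(a, x) (b, y). (a + b, x \<noteq> y)), one = (0, False)\<rparr>"

definition trivial_grp :: "unit monoid" where
  "trivial_grp = \<lparr>carrier = {()}, monoid.mult = (\<lambda>_ _. ()), one = ()\<rparr>"

definition Z2_grp :: "bool monoid" where
  "Z2_grp = \<lparr>carrier = UNIV, monoid.mult = (\<lambda>x y. x \<noteq> y), one = False\<rparr>"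

definition wreath :: "('a, 'm) monoid_scheme \<Rightarrow> nat \<Rightarrow> ((nat \<Rightarrow> 'a) \<times> (nat \<Rightarrow> nat)) monoid" where
  "wreath G n =
     \<lparr>carrier = {(g, s). g \<in> {1..n} \<rightarrow>\<^sub>E carrier G \<and> s permutes {1..n}},
      monoid.mult = (\<lambda>(g, s) (g', s'). (\<lambda>i\<in>{1..n}. monoid.mult G (g i) (g' (inv_into UNIV s i)), s \<circ> s')),
      one = (\<lambda>i\<in>{1..n}. monoid.one G, id)\<rparr>"

definition chiA :: "('a, 'm) monoid_scheme \<Rightarrow> rat" where
  "chiA G = of_nat (card (hom ZxZ2 G)) / of_nat (card (carrier G))"

definition zetaA :: "('a, 'm) monoid_scheme \<Rightarrow> rat fps" where
  "zetaA G = Abs_fps (\<lambda>n. if n = 0 then 1 else chiA (wreath G n))"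

text \<open>f^c = exp(c log f) for f with constant term 1:
  log f = ln(1+X) composed with (f - 1), exp g = exp(X) composed with g.\<close>
definition fps_powr :: "rat fps \<Rightarrow> rat \<Rightarrow> rat fps" where
  "fps_powr f c = fps_exp 1 oo (fps_const c * (fps_ln 1 oo (f - 1)))"

end

theory Submission
  imports Defs
begin


lemma pow2_nth:
  fixes b :: "rat fps" assumes "fps_nth b 0 = 0"
  shows "fps_nth (b^2) 0 = 0" "fps_nth (b^2) 1 = 0" "fps_nth (b^2) 2 = (fps_nth b 1)^2"
  using assms by (simp_all add: power2_eq_square fps_mult_nth numeral_2_eq_2 atLeast0AtMost atMost_Suc)

lemma compose_nth12:
  fixes a b :: "rat fps" assumes "fps_nth b 0 = 0"
  shows "fps_nth (a oo b) 1 = fps_nth a 1 * fps_nth b 1"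
    "fps_nth (a oo b) 2 = fps_nth a 1 * fps_nth b 2 + fps_nth a 2 * (fps_nth b 1)^2"
  using assms pow2_nth[OF assms]
  by (simp_all add: fps_compose_nth numeral_2_eq_2 atLeast0AtMost atMost_Suc)

lemma powr_nth:
  assumes "fps_nth f 0 = 1"
  shows "fps_nth (fps_powr f c) 1 = c * fps_nth f 1"
    "fps_nth (fps_powr f c) 2 = c * fps_nth f 2 + c*(c-1)/2 * (fps_nth f 1)^2"
proof -
  let ?g = "f - 1"
  have g0: "fps_nth ?g 0 = 0" using assms by simp
  let ?L = "fps_ln 1 oo ?g"
  have L0: "fps_nth ?L 0 = 0" by (simp add: fps_ln_nth)
  have L1: "fps_nth ?L 1 = fps_nth f 1" using compose_nth12(1)[OF g0, of "fps_ln 1"] by (simp add: fps_ln_nth)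
  have L2: "fps_nth ?L 2 = fps_nth f 2 - (fps_nth f 1)^2/2" using compose_nth12(2)[OF g0, of "fps_ln 1"] by (simp add: fps_ln_nth)
  let ?M = "fps_const c * ?L"
  have M0: "fps_nth ?M 0 = 0" using L0 by simp
  show "fps_nth (fps_powr f c) 1 = c * fps_nth f 1" unfolding fps_powr_def
    using compose_nth12(1)[OF M0, of "fps_exp 1"] L1 by simp
  show "fps_nth (fps_powr f c) 2 = c * fps_nth f 2 + c*(c-1)/2 * (fps_nth f 1)^2" unfolding fps_powr_def
    using compose_nth12(2)[OF M0, of "fps_exp 1"] L1 L2 by (simp add: power_mult_distrib field_simps power2_eq_square)
qed


lemma ZxZ2_simps [simp]: "carrier ZxZ2 = UNIV" "(a,x) \<otimes>\<^bsub>ZxZ2\<^esub> (b,y) = (a+b, x \<noteq> y)" "\<one>\<^bsub>ZxZ2\<^esub> = (0,False)"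
  by (simp_all add: ZxZ2_def)

lemma group_ZxZ2: "group ZxZ2"
proof (rule groupI)
  fix x y z :: "int \<times> bool"
  show "x \<otimes>\<^bsub>ZxZ2\<^esub> y \<otimes>\<^bsub>ZxZ2\<^esub> z = x \<otimes>\<^bsub>ZxZ2\<^esub> (y \<otimes>\<^bsub>ZxZ2\<^esub> z)"
    by (cases x; cases y; cases z) auto
  show "\<one>\<^bsub>ZxZ2\<^esub> \<otimes>\<^bsub>ZxZ2\<^esub> x = x" by (cases x) auto
  show "\<exists>y\<in>carrier ZxZ2. y \<otimes>\<^bsub>ZxZ2\<^esub> x = \<one>\<^bsub>ZxZ2\<^esub>"
    by (cases x) (rule bexI[of _ "(- fst x, snd x)"], auto)
qed auto

lemma ZxZ2_pow_nat: "(1::int, False) [^]\<^bsub>ZxZ2\<^esub> (n::nat) = (int n, False)"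
  by (induction n) auto

lemma ZxZ2_pow: "(1::int, False) [^]\<^bsub>ZxZ2\<^esub> (k::int) = (k, False)"
proof (cases "k < 0")
  case True
  interpret group ZxZ2 by (rule group_ZxZ2)
  have "inv\<^bsub>ZxZ2\<^esub> (int (nat (-k)), False) = (k, False)"
    using True by (intro inv_equality) auto
  then show ?thesis using True by (simp add: int_pow_def2 ZxZ2_pow_nat)
qed (simp add: int_pow_def2 ZxZ2_pow_nat)

definition pairs :: "('a, 'm) monoid_scheme \<Rightarrow> ('a \<times> 'a) set" where
  "pairs H = {(a,b). a \<in> carrier H \<and> b \<in> carrier H \<and> b \<otimes>\<^bsub>H\<^esub> b = \<one>\<^bsub>H\<^esub> \<and> a \<otimes>\<^bsub>H\<^esub> b = b \<otimes>\<^bsub>H\<^esub> a}"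

lemma (in group) inv_commute:
  assumes "a \<in> carrier G" "b \<in> carrier G" "a \<otimes> b = b \<otimes> a"
  shows "inv a \<otimes> b = b \<otimes> inv a"
proof -
  have "a \<otimes> (inv a \<otimes> b) = b" using assms by (simp add: m_assoc[symmetric])
  moreover have "a \<otimes> (b \<otimes> inv a) = b" using assms by (simp add: m_assoc[symmetric] assms(3)) (simp add: m_assoc)
  ultimately show ?thesis using assms by (metis Units_eq Units_l_cancel m_closed inv_closed)
qed

lemma (in group) commute_int_pow:
  assumes "a \<in> carrier G" "b \<in> carrier G" "a \<otimes> b = b \<otimes> a"
  shows "a [^] (k::int) \<otimes> b = b \<otimes> a [^] k"
proof (cases "k < 0")
  case True
  have c: "a [^] nat (-k) \<otimes> b = b \<otimes> a [^] nat (-k)" using assms group_commutes_pow by blast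
  have e: "a [^] k = inv (a [^] nat (-k))"
    using True int_pow_neg[OF assms(1), of "-k"] pow_nat[where i="-k" and x=a and G=G] by simp
  show ?thesis unfolding e using c assms by (intro inv_commute) auto
next
  case False
  then have e: "a [^] k = a [^] nat k" using pow_nat[where i="k" and x=a and G=G] by simp
  show ?thesis unfolding e using assms group_commutes_pow by blast
qed

lemma hom_card_pairs:
  fixes H :: "('a, 'm) monoid_scheme"
  assumes H: "group H"
  shows "card (hom ZxZ2 H) = card (pairs H)"
proof -
  interpret H: group H by (rule H)
  interpret Z: group ZxZ2 by (rule group_ZxZ2)
  define \<phi> where "\<phi> = (\<lambda>h::int \<times> bool \<Rightarrow> 'a. (h (1,False), h (0,True)))"
  have repr: "h (k,x) = h (1,False) [^]\<^bsub>H\<^esub> k \<otimes>\<^bsub>H\<^esub> (if x then h (0,True) else \<one>\<^bsub>H\<^esub>)"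
    if h: "h \<in> hom ZxZ2 H" for h k x
  proof -
    interpret gh: group_hom ZxZ2 H h by (simp add: group_hom_def group_hom_axioms_def h H group_ZxZ2)
    have "(k,x) = (1,False) [^]\<^bsub>ZxZ2\<^esub> k \<otimes>\<^bsub>ZxZ2\<^esub> (if x then (0,True) else \<one>\<^bsub>ZxZ2\<^esub>)"
      by (simp add: ZxZ2_pow)
    then have "h (k,x) = h ((1,False) [^]\<^bsub>ZxZ2\<^esub> k) \<otimes>\<^bsub>H\<^esub> h (if x then (0,True) else \<one>\<^bsub>ZxZ2\<^esub>)"
      by (metis UNIV_I ZxZ2_simps(1) gh.hom_mult)
    also have "\<dots> = h (1,False) [^]\<^bsub>H\<^esub> k \<otimes>\<^bsub>H\<^esub> (if x then h (0,True) else \<one>\<^bsub>H\<^esub>)"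
      using gh.hom_one by (simp add: gh.hom_int_pow)
    finally show ?thesis .
  qed
  have "bij_betw \<phi> (hom ZxZ2 H) (pairs H)"
  proof (rule bij_betw_imageI)
    show "inj_on \<phi> (hom ZxZ2 H)"
    proof (rule inj_onI)
      fix h h' assume h: "h \<in> hom ZxZ2 H" and h': "h' \<in> hom ZxZ2 H" and e: "\<phi> h = \<phi> h'"
      show "h = h'"
      proof
        fix p show "h p = h' p"
        proof (cases p)
          case (Pair k x)
          have e1: "h (1,False) = h' (1,False)" and e2: "h (0,True) = h' (0,True)" using e by (simp_all add: \<phi>_def)
          show ?thesis unfolding Pair repr[OF h, of k x] repr[OF h', of k x] e1 e2 ..
        qed
      qed
    qed
    show "\<phi> ` hom ZxZ2 H = pairs H"
    proof
      show "\<phi> ` hom ZxZ2 H \<subseteq> pairs H"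
      proof (rule image_subsetI)
        fix h assume h: "h \<in> hom ZxZ2 H"
        interpret gh: group_hom ZxZ2 H h by (simp add: group_hom_def group_hom_axioms_def h H group_ZxZ2)
        have m: "h (a \<otimes>\<^bsub>ZxZ2\<^esub> b) = h a \<otimes>\<^bsub>H\<^esub> h b" for a b by (simp add: gh.hom_mult)
        have 1: "h (0,True) \<otimes>\<^bsub>H\<^esub> h (0,True) = \<one>\<^bsub>H\<^esub>"
          using m[of "(0,True)" "(0,True)"] gh.hom_one by simp
        have 2: "h (1,False) \<otimes>\<^bsub>H\<^esub> h (0,True) = h (0,True) \<otimes>\<^bsub>H\<^esub> h (1,False)"
          using m[of "(1,False)" "(0,True)"] m[of "(0,True)" "(1,False)"] by simp
        show "\<phi> h \<in> pairs H" using 1 2 unfolding \<phi>_def pairs_def by auto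
      qed
      show "pairs H \<subseteq> \<phi> ` hom ZxZ2 H"
      proof (rule subsetI)
        fix p assume p: "p \<in> pairs H"
        obtain a b where pab: "p = (a,b)" by (cases p)
        from p have ab: "(a,b) \<in> pairs H" by (simp add: pab)
        then have a: "a \<in> carrier H" and b: "b \<in> carrier H" and bb: "b \<otimes>\<^bsub>H\<^esub> b = \<one>\<^bsub>H\<^esub>"
          and c: "a \<otimes>\<^bsub>H\<^esub> b = b \<otimes>\<^bsub>H\<^esub> a" by (auto simp: pairs_def)
        define h where "h = (\<lambda>(k::int,x::bool). a [^]\<^bsub>H\<^esub> k \<otimes>\<^bsub>H\<^esub> (if x then b else \<one>\<^bsub>H\<^esub>))"
        have hc: "h p \<in> carrier H" for p using a b by (cases p) (auto simp: h_def)
        have hm: "h (p \<otimes>\<^bsub>ZxZ2\<^esub> q) = h p \<otimes>\<^bsub>H\<^esub> h q" for p q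
        proof (cases p; cases q)
          fix k x l y assume [simp]: "p = (k,x)" "q = (l,y)"
          have cl: "a [^]\<^bsub>H\<^esub> l \<otimes>\<^bsub>H\<^esub> b = b \<otimes>\<^bsub>H\<^esub> a [^]\<^bsub>H\<^esub> l"
            using H.commute_int_pow[OF a b c] .
          have "h (p \<otimes>\<^bsub>ZxZ2\<^esub> q) = a [^]\<^bsub>H\<^esub> k \<otimes>\<^bsub>H\<^esub> a [^]\<^bsub>H\<^esub> l \<otimes>\<^bsub>H\<^esub> (if x \<noteq> y then b else \<one>\<^bsub>H\<^esub>)"
            by (simp add: h_def H.int_pow_mult a)
          also have "\<dots> = h p \<otimes>\<^bsub>H\<^esub> h q"
            using a b bb cl
            by (cases x; cases y; simp add: h_def H.m_assoc; simp add: H.m_assoc[symmetric])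
          finally show ?thesis .
        qed
        have "h \<in> hom ZxZ2 H" unfolding hom_def using hc hm by auto
        moreover have "\<phi> h = (a,b)" using a b by (simp add: \<phi>_def h_def)
        ultimately show "p \<in> \<phi> ` hom ZxZ2 H" unfolding pab by (metis image_eqI)
      qed
    qed
  qed
  then show ?thesis by (rule bij_betw_same_card)
qed


lemma wreath_simps:
  "carrier (wreath G n) = {(g, s). g \<in> {1..n} \<rightarrow>\<^sub>E carrier G \<and> s permutes {1..n}}"
  "(g,s) \<otimes>\<^bsub>wreath G n\<^esub> (g',s') = (\<lambda>i\<in>{1..n}. g i \<otimes>\<^bsub>G\<^esub> g' (inv_into UNIV s i), s \<circ> s')"
  "\<one>\<^bsub>wreath G n\<^esub> = (\<lambda>i\<in>{1..n}. \<one>\<^bsub>G\<^esub>, id)"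
  by (simp_all add: wreath_def)

lemma group_wreath:
  assumes G: "group G" shows "group (wreath G n)"
proof -
  interpret G: group G by (rule G)
  have invin: "inv_into UNIV s i \<in> {1..n}" if "s permutes {1..n}" "i \<in> {1..n}" for s i
    using that by (metis permutes_inv permutes_in_image)
  show ?thesis
  proof (rule groupI)
    fix x y assume x: "x \<in> carrier (wreath G n)" and y: "y \<in> carrier (wreath G n)"
    obtain g s where xe: "x = (g,s)" by (cases x)
    obtain g' s' where ye: "y = (g',s')" by (cases y)
    show "x \<otimes>\<^bsub>wreath G n\<^esub> y \<in> carrier (wreath G n)"
      using x y invin unfolding xe ye wreath_simps
      by (auto intro: permutes_compose simp: PiE_iff)
  next
    show "\<one>\<^bsub>wreath G n\<^esub> \<in> carrier (wreath G n)"
      unfolding wreath_simps by (auto intro: permutes_id)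
  next
    fix x y z assume x: "x \<in> carrier (wreath G n)" and y: "y \<in> carrier (wreath G n)"
      and z: "z \<in> carrier (wreath G n)"
    obtain g s where xe: "x = (g,s)" by (cases x)
    obtain g' s' where ye: "y = (g',s')" by (cases y)
    obtain g'' s'' where ze: "z = (g'',s'')" by (cases z)
    have s: "s permutes {1..n}" and s': "s' permutes {1..n}"
      and gc: "\<And>i. i \<in> {1..n} \<Longrightarrow> g i \<in> carrier G"
      and gc': "\<And>i. i \<in> {1..n} \<Longrightarrow> g' i \<in> carrier G"
      and gc'': "\<And>i. i \<in> {1..n} \<Longrightarrow> g'' i \<in> carrier G"
      using x y z unfolding xe ye ze wreath_simps by auto
    have io: "inv_into UNIV (s \<circ> s') = inv_into UNIV s' \<circ> inv_into UNIV s"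
      using s s' by (simp add: o_inv_distrib permutes_bij)
    have "(\<lambda>i\<in>{1..n}. (\<lambda>i\<in>{1..n}. g i \<otimes>\<^bsub>G\<^esub> g' (inv_into UNIV s i)) i \<otimes>\<^bsub>G\<^esub> g'' (inv_into UNIV (s \<circ> s') i))
        = (\<lambda>i\<in>{1..n}. g i \<otimes>\<^bsub>G\<^esub> (\<lambda>i\<in>{1..n}. g' i \<otimes>\<^bsub>G\<^esub> g'' (inv_into UNIV s' i)) (inv_into UNIV s i))"
    proof (rule restrict_ext)
      fix i assume i: "i \<in> {1..n}"
      have i1: "inv_into UNIV s i \<in> {1..n}" using invin[OF s i] .
      have i2: "inv_into UNIV s' (inv_into UNIV s i) \<in> {1..n}" using invin[OF s' i1] .
      show "(\<lambda>i\<in>{1..n}. g i \<otimes>\<^bsub>G\<^esub> g' (inv_into UNIV s i)) i \<otimes>\<^bsub>G\<^esub> g'' (inv_into UNIV (s \<circ> s') i)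
          = g i \<otimes>\<^bsub>G\<^esub> (\<lambda>i\<in>{1..n}. g' i \<otimes>\<^bsub>G\<^esub> g'' (inv_into UNIV s' i)) (inv_into UNIV s i)"
        using i i1 i2 gc gc' gc'' by (simp add: io G.m_assoc)
    qed
    then show "x \<otimes>\<^bsub>wreath G n\<^esub> y \<otimes>\<^bsub>wreath G n\<^esub> z = x \<otimes>\<^bsub>wreath G n\<^esub> (y \<otimes>\<^bsub>wreath G n\<^esub> z)"
      unfolding xe ye ze wreath_simps by (simp add: o_assoc)
  next
    fix x assume x: "x \<in> carrier (wreath G n)"
    obtain g s where xe: "x = (g,s)" by (cases x)
    have s: "s permutes {1..n}" and g: "g \<in> {1..n} \<rightarrow>\<^sub>E carrier G"
      using x unfolding xe wreath_simps by auto
    have "(\<lambda>i\<in>{1..n}. (\<lambda>i\<in>{1..n}. \<one>\<^bsub>G\<^esub>) i \<otimes>\<^bsub>G\<^esub> g (inv_into UNIV id i)) = g"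
    proof -
      have "(\<lambda>i\<in>{1..n}. (\<lambda>i\<in>{1..n}. \<one>\<^bsub>G\<^esub>) i \<otimes>\<^bsub>G\<^esub> g (inv_into UNIV id i)) = (\<lambda>i\<in>{1..n}. g i)"
        using g by (intro restrict_ext) (auto simp: inv_id PiE_iff)
      also have "\<dots> = g" using g by (simp add: PiE_restrict)
      finally show ?thesis .
    qed
    then show "\<one>\<^bsub>wreath G n\<^esub> \<otimes>\<^bsub>wreath G n\<^esub> x = x"
      unfolding xe wreath_simps by simp
    define y where "y = ((\<lambda>i\<in>{1..n}. inv\<^bsub>G\<^esub> (g (s i))), inv_into UNIV s)"
    have sin: "s i \<in> {1..n}" if "i \<in> {1..n}" for i using permutes_in_image[OF s] that by blast
    have yc: "y \<in> carrier (wreath G n)"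
      unfolding y_def wreath_simps using g sin s by (auto simp: permutes_inv)
    have "y \<otimes>\<^bsub>wreath G n\<^esub> x = \<one>\<^bsub>wreath G n\<^esub>"
    proof -
      have ii: "inv_into UNIV (inv_into UNIV s) = s" using s by (simp add: permutes_inv_inv)
      have "(\<lambda>i\<in>{1..n}. (\<lambda>i\<in>{1..n}. inv\<^bsub>G\<^esub> (g (s i))) i \<otimes>\<^bsub>G\<^esub> g (inv_into UNIV (inv_into UNIV s) i)) = (\<lambda>i\<in>{1..n}. \<one>\<^bsub>G\<^esub>)"
        using g sin by (intro restrict_ext) (auto simp: ii PiE_iff)
      moreover have "inv_into UNIV s \<circ> s = id" using s by (simp add: permutes_inv_o)
      ultimately show ?thesis unfolding y_def xe wreath_simps by simp
    qed
    then show "\<exists>y\<in>carrier (wreath G n). y \<otimes>\<^bsub>wreath G n\<^esub> x = \<one>\<^bsub>wreath G n\<^esub>"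
      using yc by blast
  qed
qed


lemma pairs_transfer:
  fixes K :: "('b,'n) monoid_scheme" and H :: "('a,'m) monoid_scheme"
  assumes bij: "bij_betw E (carrier K) (carrier H)"
    and hom: "\<And>x y. x \<in> carrier K \<Longrightarrow> y \<in> carrier K \<Longrightarrow> E (x \<otimes>\<^bsub>K\<^esub> y) = E x \<otimes>\<^bsub>H\<^esub> E y"
    and one: "E \<one>\<^bsub>K\<^esub> = \<one>\<^bsub>H\<^esub>"
    and cl: "\<And>x y. x \<in> carrier K \<Longrightarrow> y \<in> carrier K \<Longrightarrow> x \<otimes>\<^bsub>K\<^esub> y \<in> carrier K"
    and oc: "\<one>\<^bsub>K\<^esub> \<in> carrier K"
  shows "card (pairs H) = card (pairs K)" "card (carrier H) = card (carrier K)"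
proof -
  have inj: "inj_on E (carrier K)" using bij by (simp add: bij_betw_def)
  have im: "E ` carrier K = carrier H" using bij by (simp add: bij_betw_def)
  let ?F = "\<lambda>(a,b). (E a, E b)"
  have injF: "inj_on ?F (pairs K)" using inj by (auto simp: inj_on_def pairs_def)
  have "?F ` pairs K = pairs H"
  proof
    show "?F ` pairs K \<subseteq> pairs H"
    proof (rule image_subsetI)
      fix p assume p: "p \<in> pairs K"
      then obtain a b where [simp]: "p = (a,b)" and a: "a \<in> carrier K" and b: "b \<in> carrier K"
        and bb: "b \<otimes>\<^bsub>K\<^esub> b = \<one>\<^bsub>K\<^esub>" and c: "a \<otimes>\<^bsub>K\<^esub> b = b \<otimes>\<^bsub>K\<^esub> a"
        by (auto simp: pairs_def)
      show "?F p \<in> pairs H" using a b bb c im hom[OF b b] hom[OF a b] hom[OF b a] one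
        by (auto simp: pairs_def)
    qed
    show "pairs H \<subseteq> ?F ` pairs K"
    proof (rule subsetI)
      fix p assume p: "p \<in> pairs H"
      then obtain a' b' where pe: "p = (a',b')" and a': "a' \<in> carrier H" and b': "b' \<in> carrier H"
        and bb: "b' \<otimes>\<^bsub>H\<^esub> b' = \<one>\<^bsub>H\<^esub>" and c: "a' \<otimes>\<^bsub>H\<^esub> b' = b' \<otimes>\<^bsub>H\<^esub> a'"
        by (auto simp: pairs_def)
      have "a' \<in> E ` carrier K" using a' im by simp
      then obtain a where a: "a \<in> carrier K" "E a = a'" by auto
      have "b' \<in> E ` carrier K" using b' im by simp
      then obtain b where b: "b \<in> carrier K" "E b = b'" by auto
      have "E (b \<otimes>\<^bsub>K\<^esub> b) = E \<one>\<^bsub>K\<^esub>" using hom[OF b(1) b(1)] b bb one by simp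
      then have 1: "b \<otimes>\<^bsub>K\<^esub> b = \<one>\<^bsub>K\<^esub>" using inj cl[OF b(1) b(1)] oc by (meson inj_onD)
      have "E (a \<otimes>\<^bsub>K\<^esub> b) = E (b \<otimes>\<^bsub>K\<^esub> a)" using hom[OF a(1) b(1)] hom[OF b(1) a(1)] a b c by simp
      then have 2: "a \<otimes>\<^bsub>K\<^esub> b = b \<otimes>\<^bsub>K\<^esub> a" using inj cl[OF a(1) b(1)] cl[OF b(1) a(1)] by (meson inj_onD)
      have "(a,b) \<in> pairs K" using a b 1 2 by (simp add: pairs_def)
      moreover have "p = ?F (a,b)" using pe a b by simp
      ultimately show "p \<in> ?F ` pairs K" by blast
    qed
  qed
  then show "card (pairs H) = card (pairs K)" using card_image[OF injF] by simp
  show "card (carrier H) = card (carrier K)" using bij by (metis bij_betw_same_card)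
qed

lemma wreath1_iso:
  fixes G :: "('a,'m) monoid_scheme"
  assumes G: "group G"
  shows "card (pairs (wreath G 1)) = card (pairs G)" "card (carrier (wreath G 1)) = card (carrier G)"
proof -
  interpret G: group G by (rule G)
  define E where "E = (\<lambda>x::'a. ((\<lambda>i\<in>{1..1::nat}. x), id :: nat \<Rightarrow> nat))"
  have bij: "bij_betw E (carrier G) (carrier (wreath G 1))"
  proof (rule bij_betw_imageI)
    show "inj_on E (carrier G)" unfolding E_def by (rule inj_onI) (metis atLeastAtMost_singleton fst_conv insertI1 restrict_apply')
    show "E ` carrier G = carrier (wreath G 1)"
    proof
      show "E ` carrier G \<subseteq> carrier (wreath G 1)"
      proof (rule image_subsetI)
        fix x assume x: "x \<in> carrier G"
        have "(\<lambda>i\<in>{1..1::nat}. x) \<in> {1..1} \<rightarrow>\<^sub>E carrier G" using x by (simp only: restrict_PiE_iff) simp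
        then show "E x \<in> carrier (wreath G 1)" unfolding E_def wreath_simps by simp
      qed
      show "carrier (wreath G 1) \<subseteq> E ` carrier G"
      proof
        fix p assume "p \<in> carrier (wreath G 1)"
        then obtain g s where pe: "p = (g,s)" and g: "g \<in> {1..1} \<rightarrow>\<^sub>E carrier G" and s: "s permutes {1..1}"
          unfolding wreath_simps by auto
        have "s = id" using s by simp
        moreover have "g = (\<lambda>i\<in>{1..1::nat}. g 1)" using g by (auto simp: PiE_iff extensional_def)
        moreover have "g 1 \<in> carrier G" using g by auto
        ultimately show "p \<in> E ` carrier G" unfolding pe E_def by auto
      qed
    qed
  qed
  have hom: "E (x \<otimes>\<^bsub>G\<^esub> y) = E x \<otimes>\<^bsub>wreath G 1\<^esub> E y" if "x \<in> carrier G" "y \<in> carrier G" for x y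
    unfolding E_def wreath_simps by (auto simp: inv_id)
  have one: "E \<one>\<^bsub>G\<^esub> = \<one>\<^bsub>wreath G 1\<^esub>" unfolding E_def wreath_simps by simp
  have cl: "x \<otimes>\<^bsub>G\<^esub> y \<in> carrier G" if "x \<in> carrier G" "y \<in> carrier G" for x y using that by simp
  show "card (pairs (wreath G 1)) = card (pairs G)" by (rule pairs_transfer(1)[OF bij hom one cl G.one_closed])
  show "card (carrier (wreath G 1)) = card (carrier G)" using bij_betw_same_card[OF bij] by (rule sym)
qed

definition K2 :: "('a,'m) monoid_scheme \<Rightarrow> ('a \<times> 'a \<times> bool) monoid" where
  "K2 G = \<lparr>carrier = carrier G \<times> carrier G \<times> UNIV,
     monoid.mult = (\<lambda>(x,y,p) (x',y',p'). (x \<otimes>\<^bsub>G\<^esub> (if p then y' else x'), y \<otimes>\<^bsub>G\<^esub> (if p then x' else y'), p \<noteq> p')),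
     one = (\<one>\<^bsub>G\<^esub>, \<one>\<^bsub>G\<^esub>, False)\<rparr>"

lemma perm12: "s permutes {1..2::nat} \<Longrightarrow> s = id \<or> s = Transposition.transpose 1 2"
proof -
  assume s: "s permutes {1..2::nat}"
  have out: "s i = i" if "i \<notin> {1..2}" for i using s that by (simp add: permutes_not_in)
  have s1: "s 1 \<in> {1..2}" using permutes_in_image[OF s, of 1] by auto
  have s2: "s 2 \<in> {1..2}" using permutes_in_image[OF s, of 2] by auto
  have inj: "s 1 \<noteq> s 2" using permutes_inj[OF s] by (metis injD numeral_eq_one_iff semiring_norm(85))
  show ?thesis
  proof (cases "s 1 = 1")
    case True
    then have "s 2 = 2" using s2 inj by auto
    then have "s = id" using True out by (intro ext) (metis atLeastAtMost_iff id_apply le_antisym not_less_eq_eq one_le_numeral numeral_2_eq_2 One_nat_def)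
    then show ?thesis ..
  next
    case False
    then have a: "s 1 = 2" using s1 by auto
    then have b: "s 2 = 1" using s2 inj by auto
    have "s = Transposition.transpose 1 2"
    proof
      fix i show "s i = Transposition.transpose 1 2 i"
        using a b out[of i] by (cases "i = 1"; cases "i = 2") auto
    qed
    then show ?thesis ..
  qed
qed

lemma wreath2_iso:
  fixes G :: "('a,'m) monoid_scheme"
  assumes G: "group G"
  shows "card (pairs (wreath G 2)) = card (pairs (K2 G))" "card (carrier (wreath G 2)) = card (carrier (K2 G))"
proof -
  interpret G: group G by (rule G)
  define E where "E = (\<lambda>(x::'a,y::'a,p::bool). ((\<lambda>i\<in>{1..2::nat}. if i = 1 then x else y), if p then Transposition.transpose (1::nat) 2 else id))"
  have tp: "Transposition.transpose (1::nat) 2 permutes {1..2}" by (rule permutes_swap_id) auto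
  have bij: "bij_betw E (carrier (K2 G)) (carrier (wreath G 2))"
  proof (rule bij_betw_imageI)
    show "inj_on E (carrier (K2 G))"
    proof (rule inj_onI)
      fix u v assume "u \<in> carrier (K2 G)" "v \<in> carrier (K2 G)" and e: "E u = E v"
      obtain x y p where u: "u = (x,y,p)" by (cases u rule: prod_cases3) blast
      obtain x' y' p' where v: "v = (x',y',p')" by (cases v rule: prod_cases3) blast
      have 1: "x = x'" using fun_cong[OF arg_cong[OF e, of fst], of 1] by (simp add: E_def u v)
      have 2: "y = y'" using fun_cong[OF arg_cong[OF e, of fst], of 2] by (simp add: E_def u v)
      have "(if p then Transposition.transpose (1::nat) 2 else id) 1 = (if p' then Transposition.transpose (1::nat) 2 else id) 1"
        using arg_cong[OF e, of snd] by (simp add: E_def u v)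
      then have 3: "p = p'" by (cases p; cases p') auto
      show "u = v" using 1 2 3 u v by simp
    qed
    show "E ` carrier (K2 G) = carrier (wreath G 2)"
    proof
      show "E ` carrier (K2 G) \<subseteq> carrier (wreath G 2)"
        using tp unfolding E_def wreath_simps K2_def by (auto simp: restrict_PiE_iff)
      show "carrier (wreath G 2) \<subseteq> E ` carrier (K2 G)"
      proof
        fix q assume "q \<in> carrier (wreath G 2)"
        then obtain g s where qe: "q = (g,s)" and g: "g \<in> {1..2} \<rightarrow>\<^sub>E carrier G" and s: "s permutes {1..2}"
          unfolding wreath_simps by auto
        have ge: "g = (\<lambda>i\<in>{1..2::nat}. if i = 1 then g 1 else g 2)"
        proof
          fix i show "g i = (\<lambda>i\<in>{1..2::nat}. if i = 1 then g 1 else g 2) i"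
          proof (cases "i \<in> {1..2}")
            case True then have "i = 1 \<or> i = 2" by auto
            then show ?thesis by (elim disjE) simp_all
          next
            case False
            then have "i \<noteq> 1" "i \<notin> {1..2}" by auto
            then show ?thesis using PiE_arb[OF g False] False by (auto simp: restrict_def)
          qed
        qed
        have gc: "g 1 \<in> carrier G" "g 2 \<in> carrier G" using PiE_mem[OF g, of 1] PiE_mem[OF g, of 2] by auto
        obtain p where sdef: "s = (if p then Transposition.transpose (1::nat) 2 else id)"
        proof (cases "s = id")
          case True show ?thesis by (rule that[of False]) (simp add: True)
        next
          case False then show ?thesis using perm12[OF s] by (intro that[of True]) simp
        qed
        have "q = E (g 1, g 2, p)" unfolding qe E_def prod.case
          by (simp only: prod.inject ge[symmetric] sdef)
        then show "q \<in> E ` carrier (K2 G)" by (rule image_eqI) (use gc in \<open>simp add: K2_def\<close>)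
      qed
    qed
  qed
  have hom: "E (u \<otimes>\<^bsub>K2 G\<^esub> v) = E u \<otimes>\<^bsub>wreath G 2\<^esub> E v" if "u \<in> carrier (K2 G)" "v \<in> carrier (K2 G)" for u v
  proof -
    obtain x y p where u: "u = (x,y,p)" by (cases u rule: prod_cases3) blast
    obtain x' y' p' where v: "v = (x',y',p')" by (cases v rule: prod_cases3) blast
    have fst: "(\<lambda>i\<in>{1..2::nat}. if i = 1 then x \<otimes>\<^bsub>G\<^esub> (if p then y' else x') else y \<otimes>\<^bsub>G\<^esub> (if p then x' else y'))
      = (\<lambda>i\<in>{1..2}. (\<lambda>i\<in>{1..2::nat}. if i = 1 then x else y) i \<otimes>\<^bsub>G\<^esub> (\<lambda>i\<in>{1..2::nat}. if i = 1 then x' else y') (inv_into UNIV (if p then Transposition.transpose (1::nat) 2 else id) i))"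
    proof (rule restrict_ext)
      fix i :: nat assume i: "i \<in> {1..2}"
      then have "i = 1 \<or> i = 2" by auto
      then show "(if i = 1 then x \<otimes>\<^bsub>G\<^esub> (if p then y' else x') else y \<otimes>\<^bsub>G\<^esub> (if p then x' else y'))
        = (\<lambda>i\<in>{1..2::nat}. if i = 1 then x else y) i \<otimes>\<^bsub>G\<^esub> (\<lambda>i\<in>{1..2::nat}. if i = 1 then x' else y') (inv_into UNIV (if p then Transposition.transpose (1::nat) 2 else id) i)"
        by (cases p) (auto simp: inv_id)
    qed
    have snd: "(if p \<noteq> p' then Transposition.transpose (1::nat) 2 else id)
      = (if p then Transposition.transpose (1::nat) 2 else id) \<circ> (if p' then Transposition.transpose (1::nat) 2 else id)"
      by (cases p; cases p') auto
    have m: "u \<otimes>\<^bsub>K2 G\<^esub> v = (x \<otimes>\<^bsub>G\<^esub> (if p then y' else x'), y \<otimes>\<^bsub>G\<^esub> (if p then x' else y'), p \<noteq> p')"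
      by (simp add: K2_def u v)
    show ?thesis unfolding m unfolding u v E_def prod.case wreath_simps fst snd ..
  qed
  have one: "E \<one>\<^bsub>K2 G\<^esub> = \<one>\<^bsub>wreath G 2\<^esub>"
  proof -
    have r: "(\<lambda>i\<in>{1..2::nat}. if i = 1 then \<one>\<^bsub>G\<^esub> else \<one>\<^bsub>G\<^esub>) = (\<lambda>i\<in>{1..2::nat}. \<one>\<^bsub>G\<^esub>)" by simp
    have o: "\<one>\<^bsub>K2 G\<^esub> = (\<one>\<^bsub>G\<^esub>, \<one>\<^bsub>G\<^esub>, False)" by (simp add: K2_def)
    show ?thesis unfolding o E_def prod.case wreath_simps r if_False ..
  qed
  have cl: "u \<otimes>\<^bsub>K2 G\<^esub> v \<in> carrier (K2 G)" if "u \<in> carrier (K2 G)" "v \<in> carrier (K2 G)" for u v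
    using that by (auto simp: K2_def split: prod.splits)
  have oc: "\<one>\<^bsub>K2 G\<^esub> \<in> carrier (K2 G)" by (simp add: K2_def)
  show "card (pairs (wreath G 2)) = card (pairs (K2 G))" by (rule pairs_transfer(1)[OF bij hom one cl oc])
  show "card (carrier (wreath G 2)) = card (carrier (K2 G))" using bij_betw_same_card[OF bij] by (rule sym)
qed


lemma group_trivial: "group trivial_grp"
  by (rule groupI) (auto simp: trivial_grp_def)

lemma group_Z2: "group Z2_grp"
  by (rule groupI) (auto simp: Z2_grp_def)

lemma chiA_pairs: "group G \<Longrightarrow> chiA G = of_nat (card (pairs G)) / of_nat (card (carrier G))"
  by (simp add: chiA_def hom_card_pairs)

lemma card_filter_sum: "finite A \<Longrightarrow> card {x\<in>A. P x} = (\<Sum>x\<in>A. if P x then 1 else 0)"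
  by (simp add: sum.If_cases Int_def conj_commute)

lemma pairs_alt: "pairs H = {z \<in> carrier H \<times> carrier H. case z of (a,b) \<Rightarrow> b \<otimes>\<^bsub>H\<^esub> b = \<one>\<^bsub>H\<^esub> \<and> a \<otimes>\<^bsub>H\<^esub> b = b \<otimes>\<^bsub>H\<^esub> a}"
  by (auto simp: pairs_def)

lemma UNIV_bool2: "(UNIV :: bool set) = {False, True}" by auto

lemma card_trivial: "card (pairs trivial_grp) = 1" "card (carrier trivial_grp) = 1"
proof -
  have "pairs trivial_grp = {((),())}" by (auto simp: pairs_def trivial_grp_def)
  then show "card (pairs trivial_grp) = 1" by simp
  show "card (carrier trivial_grp) = 1" by (simp add: trivial_grp_def)
qed

lemma card_Z2: "card (pairs Z2_grp) = 4" "card (carrier Z2_grp) = 2"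
proof -
  have "pairs Z2_grp = UNIV" by (auto simp: pairs_def Z2_grp_def)
  then show "card (pairs Z2_grp) = 4" by (simp add: UNIV_Times_UNIV[symmetric] del: UNIV_Times_UNIV)
  show "card (carrier Z2_grp) = 2" by (simp add: Z2_grp_def)
qed

lemma card_K2_trivial: "card (pairs (K2 trivial_grp)) = 4" "card (carrier (K2 trivial_grp)) = 2"
proof -
  have c: "carrier (K2 trivial_grp) = {()} \<times> {()} \<times> {False, True}" by (auto simp: K2_def trivial_grp_def)
  show "card (pairs (K2 trivial_grp)) = 4"
    unfolding pairs_alt c
    apply (subst card_filter_sum) apply simp
    by (simp add: sum.cartesian_product[symmetric] K2_def trivial_grp_def)
  show "card (carrier (K2 trivial_grp)) = 2" unfolding c by simp
qed

lemma card_K2_Z2: "card (pairs (K2 Z2_grp)) = 32" "card (carrier (K2 Z2_grp)) = 8"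
proof -
  have c: "carrier (K2 Z2_grp) = {False, True} \<times> {False, True} \<times> {False, True}" by (auto simp: K2_def Z2_grp_def)
  show "card (pairs (K2 Z2_grp)) = 32"
    unfolding pairs_alt c
    apply (subst card_filter_sum) apply simp
    by (simp add: sum.cartesian_product[symmetric] K2_def Z2_grp_def)
  show "card (carrier (K2 Z2_grp)) = 8" unfolding c by simp
qed

lemma chi_vals:
  "chiA trivial_grp = 1" "chiA Z2_grp = 2"
  "chiA (wreath trivial_grp 1) = 1" "chiA (wreath trivial_grp 2) = 2"
  "chiA (wreath Z2_grp 1) = 2" "chiA (wreath Z2_grp 2) = 4"
proof -
  show "chiA trivial_grp = 1" by (simp add: chiA_pairs group_trivial card_trivial)
  show "chiA Z2_grp = 2" by (simp add: chiA_pairs group_Z2 card_Z2)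
  show "chiA (wreath trivial_grp 1) = 1"
    using chiA_pairs[OF group_wreath[OF group_trivial, of 1]] wreath1_iso[OF group_trivial] card_trivial by simp
  show "chiA (wreath trivial_grp 2) = 2"
    using chiA_pairs[OF group_wreath[OF group_trivial, of 2]] wreath2_iso[OF group_trivial] card_K2_trivial by simp
  show "chiA (wreath Z2_grp 1) = 2"
    using chiA_pairs[OF group_wreath[OF group_Z2, of 1]] wreath1_iso[OF group_Z2] card_Z2 by simp
  show "chiA (wreath Z2_grp 2) = 4"
    using chiA_pairs[OF group_wreath[OF group_Z2, of 2]] wreath2_iso[OF group_Z2] card_K2_Z2 by simp
qed

lemma zeta_nth: "fps_nth (zetaA G) n = (if n = 0 then 1 else chiA (wreath G n))"
  by (simp add: zetaA_def)

theorem mainTheorem8: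
  shows "fps_nth (zetaA trivial_grp) 0 = 1 \<and> fps_nth (zetaA trivial_grp) 1 = 1 \<and> fps_nth (zetaA trivial_grp) 2 = 2
       \<and> fps_nth (zetaA Z2_grp) 0 = 1 \<and> fps_nth (zetaA Z2_grp) 1 = 2 \<and> fps_nth (zetaA Z2_grp) 2 = 4
       \<and> chiA Z2_grp = 2
       \<and> zetaA Z2_grp \<noteq> fps_powr (zetaA trivial_grp) (chiA Z2_grp)
       \<and> \<not> (\<exists>Z :: rat fps. fps_nth (Z) 0 = 1
              \<and> zetaA trivial_grp = fps_powr Z (chiA trivial_grp)
              \<and> zetaA Z2_grp = fps_powr Z (chiA Z2_grp))"
proof -
  have t0: "fps_nth (zetaA trivial_grp) 0 = 1" and t1: "fps_nth (zetaA trivial_grp) 1 = 1"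
    and t2: "fps_nth (zetaA trivial_grp) 2 = 2" unfolding zeta_nth using chi_vals by simp_all
  have z0: "fps_nth (zetaA Z2_grp) 0 = 1" and z1: "fps_nth (zetaA Z2_grp) 1 = 2"
    and z2: "fps_nth (zetaA Z2_grp) 2 = 4" unfolding zeta_nth using chi_vals by simp_all
  have ne: "zetaA Z2_grp \<noteq> fps_powr (zetaA trivial_grp) (chiA Z2_grp)"
  proof
    assume "zetaA Z2_grp = fps_powr (zetaA trivial_grp) (chiA Z2_grp)"
    then have "fps_nth (zetaA Z2_grp) 2 = fps_nth (fps_powr (zetaA trivial_grp) 2) 2" by (simp add: chi_vals)
    also have "\<dots> = 5" using powr_nth(2)[OF t0, of 2] t1 t2 by simp
    finally show False using z2 by simp
  qed
  have nex: "\<not> (\<exists>Z :: rat fps. fps_nth (Z) 0 = 1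
              \<and> zetaA trivial_grp = fps_powr Z (chiA trivial_grp)
              \<and> zetaA Z2_grp = fps_powr Z (chiA Z2_grp))"
  proof
    assume "\<exists>Z :: rat fps. fps_nth (Z) 0 = 1
              \<and> zetaA trivial_grp = fps_powr Z (chiA trivial_grp)
              \<and> zetaA Z2_grp = fps_powr Z (chiA Z2_grp)"
    then obtain Z :: "rat fps" where Z0: "fps_nth Z 0 = 1" and e1: "zetaA trivial_grp = fps_powr Z 1"
      and e2: "zetaA Z2_grp = fps_powr Z 2" by (auto simp: chi_vals)
    have "fps_nth Z 1 = 1" using arg_cong[OF e1, of "\<lambda>f. fps_nth f 1"] powr_nth(1)[OF Z0, of 1] t1 by simp
    moreover have "fps_nth Z 2 = 2" using arg_cong[OF e1, of "\<lambda>f. fps_nth f 2"] powr_nth(2)[OF Z0, of 1] t2 by simp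
    ultimately have "fps_nth (fps_powr Z 2) 2 = 5" using powr_nth(2)[OF Z0, of 2] by simp
    then show False using e2 z2 by simp
  qed
  show ?thesis using t0 t1 t2 z0 z1 z2 ne nex chi_vals(2) by blast
qed

end
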